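(* Let $d \geq 2$ and $n_1,\dots,n_d \geq 1$ be integers, and let $G_1$ and $G_2$ be graphs each having at least one edge. Then $K_{n_1,\dots,n_d}$ is isomorphic to a subgraph of $G_1\times G_2$ if and only if there exist positive integers $a_1,\dots,a_d,b_1,\dots,b_d$ such that $K_{a_1,\dots,a_d}$ is isomorphic to a subgraph of $G_1$, $K_{b_1,\dots,b_d}$ is isomorphic to a subgraph of $G_2$, and $n_i \leq a_ib_i$ for all $i\in\{1,\dots,d\}$.
   Context: The direct product $G_1 \times G_2$ has vertex set $V(G_1)\times V(G_2)$, with $(a,v)(b,u)$ an edge iff $ab\in E(G_1)$ and $uv\in E(G_2)$. $K_{n_1,\dots,n_d}$ denotes the complete $d$-partite graph with parts of sizes $n_1,\dots,n_d$. *)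

theory Defs
  imports Main
begin

definition graph :: "'a set \<Rightarrow> ('a \<Rightarrow> 'a \<Rightarrow> bool) \<Rightarrow> bool" where
  "graph V E \<longleftrightarrow> finite V \<and> (\<forall>u v. E u v \<longrightarrow> u \<in> V \<and> v \<in> V)
     \<and> (\<forall>u v. E u v \<longrightarrow> E v u) \<and> (\<forall>v. \<not> E v v)"

definition prod_edges :: "('a \<Rightarrow> 'a \<Rightarrow> bool) \<Rightarrow> ('b \<Rightarrow> 'b \<Rightarrow> bool)
    \<Rightarrow> ('a \<times> 'b) \<Rightarrow> ('a \<times> 'b) \<Rightarrow> bool" where
  "prod_edges E1 E2 x y \<longleftrightarrow> E1 (fst x) (fst y) \<and> E2 (snd x) (snd y)"

definition subgraph_iso :: "'a set \<Rightarrow> ('a \<Rightarrow> 'a \<Rightarrow> bool) \<Rightarrow> 'b set \<Rightarrow> ('b \<Rightarrow> 'b \<Rightarrow> bool) \<Rightarrow> bool" where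
  "subgraph_iso VH EH VG EG \<longleftrightarrow> (\<exists>f. inj_on f VH \<and> f ` VH \<subseteq> VG \<and>
      (\<forall>u\<in>VH. \<forall>v\<in>VH. EH u v \<longrightarrow> EG (f u) (f v)))"

definition KV :: "nat \<Rightarrow> (nat \<Rightarrow> nat) \<Rightarrow> (nat \<times> nat) set" where
  "KV d n = {(i, j). i \<in> {1..d} \<and> j < n i}"

definition KE :: "nat \<Rightarrow> (nat \<Rightarrow> nat) \<Rightarrow> (nat \<times> nat) \<Rightarrow> (nat \<times> nat) \<Rightarrow> bool" where
  "KE d n x y \<longleftrightarrow> x \<in> KV d n \<and> y \<in> KV d n \<and> fst x \<noteq> fst y"

end

theory Submission
  imports Defs
begin

lemma embed_multi:
  fixes V :: "'a set" and E :: "'a \<Rightarrow> 'a \<Rightarrow> bool" and A :: "nat \<Rightarrow> 'a set"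
  assumes irr: "\<forall>v. \<not> E v v"
    and sub: "\<forall>i\<in>{1..d}. A i \<subseteq> V \<and> finite (A i)"
    and comp: "\<forall>i\<in>{1..d}. \<forall>i'\<in>{1..d}. i \<noteq> i' \<longrightarrow> (\<forall>x\<in>A i. \<forall>y\<in>A i'. E x y)"
  shows "subgraph_iso (KV d (\<lambda>i. card (A i))) (KE d (\<lambda>i. card (A i))) V E"
proof -
  define \<phi> where "\<phi> i = (SOME h. bij_betw h {0..<card (A i)} (A i))" for i
  have \<phi>: "bij_betw (\<phi> i) {0..<card (A i)} (A i)" if "i\<in>{1..d}" for i
    using ex_bij_betw_nat_finite[of "A i"] sub that unfolding \<phi>_def by (metis someI_ex)
  define f where "f = (\<lambda>(i::nat,j::nat). \<phi> i j)"
  have inA: "f (i,j) \<in> A i" if "(i,j) \<in> KV d (\<lambda>i. card (A i))" for i j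
    using that \<phi>[of i] unfolding KV_def f_def by (auto dest: bij_betwE)
  show ?thesis unfolding subgraph_iso_def
  proof (intro exI[of _ f] conjI)
    show "inj_on f (KV d (\<lambda>i. card (A i)))"
    proof (rule inj_onI)
      fix x y assume x: "x \<in> KV d (\<lambda>i. card (A i))" and y: "y \<in> KV d (\<lambda>i. card (A i))"
        and eq: "f x = f y"
      obtain i j where xij: "x = (i,j)" by fastforce
      obtain i' j' where yij: "y = (i',j')" by fastforce
      have i: "i \<in> {1..d}" "j < card (A i)" using x xij unfolding KV_def by auto
      have i': "i' \<in> {1..d}" "j' < card (A i')" using y yij unfolding KV_def by auto
      have ii: "i = i'"
      proof (rule ccontr)
        assume "i \<noteq> i'"
        then have "E (f x) (f y)" using comp i i' inA x y xij yij by blast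
        then show False using eq irr by simp
      qed
      have "\<phi> i j = \<phi> i j'" using eq xij yij ii unfolding f_def by simp
      then have "j = j'" using \<phi>[OF i(1)] i i' ii unfolding bij_betw_def inj_on_def by auto
      then show "x = y" using xij yij ii by simp
    qed
    show "f ` KV d (\<lambda>i. card (A i)) \<subseteq> V"
    proof
      fix z assume "z \<in> f ` KV d (\<lambda>i. card (A i))"
      then obtain i j where "(i,j) \<in> KV d (\<lambda>i. card (A i))" "z = f (i,j)" by auto
      then show "z \<in> V" using inA sub unfolding KV_def by blast
    qed
    show "\<forall>u\<in>KV d (\<lambda>i. card (A i)). \<forall>v\<in>KV d (\<lambda>i. card (A i)).
          KE d (\<lambda>i. card (A i)) u v \<longrightarrow> E (f u) (f v)"
    proof (intro ballI impI)
      fix u v assume u: "u \<in> KV d (\<lambda>i. card (A i))" and v: "v \<in> KV d (\<lambda>i. card (A i))"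
        and e: "KE d (\<lambda>i. card (A i)) u v"
      obtain i j where uij: "u = (i,j)" by fastforce
      obtain i' j' where vij: "v = (i',j')" by fastforce
      have "i \<in> {1..d}" "i' \<in> {1..d}" using u v uij vij unfolding KV_def by auto
      moreover have "i \<noteq> i'" using e uij vij unfolding KE_def by auto
      ultimately show "E (f u) (f v)" using comp inA u v uij vij by blast
    qed
  qed
qed

theorem mainTheorem2:
  fixes d :: nat and n :: "nat \<Rightarrow> nat"
    and V1 :: "'a set" and E1 :: "'a \<Rightarrow> 'a \<Rightarrow> bool"
    and V2 :: "'b set" and E2 :: "'b \<Rightarrow> 'b \<Rightarrow> bool"
  assumes "d \<ge> 2"
    and "\<forall>i\<in>{1..d}. n i \<ge> 1"
    and "graph V1 E1" and "graph V2 E2"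
    and "\<exists>u v. E1 u v" and "\<exists>u v. E2 u v"
  shows "subgraph_iso (KV d n) (KE d n) (V1 \<times> V2) (prod_edges E1 E2) \<longleftrightarrow>
    (\<exists>a b :: nat \<Rightarrow> nat. (\<forall>i\<in>{1..d}. a i \<ge> 1 \<and> b i \<ge> 1 \<and> n i \<le> a i * b i)
       \<and> subgraph_iso (KV d a) (KE d a) V1 E1
       \<and> subgraph_iso (KV d b) (KE d b) V2 E2)"
proof
  assume "subgraph_iso (KV d n) (KE d n) (V1 \<times> V2) (prod_edges E1 E2)"
  then obtain h where hinj: "inj_on h (KV d n)" and hV: "h ` KV d n \<subseteq> V1 \<times> V2"
    and hE: "\<forall>u\<in>KV d n. \<forall>v\<in>KV d n. KE d n u v \<longrightarrow> prod_edges E1 E2 (h u) (h v)"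
    unfolding subgraph_iso_def by blast
  define P where "P i = h ` ({i} \<times> {..<n i})" for i
  define A where "A i = fst ` P i" for i
  define B where "B i = snd ` P i" for i
  have PK: "{i} \<times> {..<n i} \<subseteq> KV d n" if "i \<in> {1..d}" for i
    using that unfolding KV_def by auto
  have cardP: "card (P i) = n i" if "i \<in> {1..d}" for i
    unfolding P_def using card_image[OF inj_on_subset[OF hinj PK[OF that]]] by simp
  have finP: "finite (P i)" for i unfolding P_def by simp
  have PAB: "P i \<subseteq> A i \<times> B i" for i unfolding A_def B_def by force
  have sub1: "\<forall>i\<in>{1..d}. A i \<subseteq> V1 \<and> finite (A i)"
    using hV PK finP unfolding A_def P_def by fastforce
  have sub2: "\<forall>i\<in>{1..d}. B i \<subseteq> V2 \<and> finite (B i)"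
    using hV PK finP unfolding B_def P_def by fastforce
  have edge: "prod_edges E1 E2 x y"
    if H: "i\<in>{1..d}" "i'\<in>{1..d}" "i \<noteq> i'" "x \<in> P i" "y \<in> P i'" for i i' x y
  proof -
    obtain j where j: "j < n i" "x = h (i,j)" using H(4) unfolding P_def by blast
    obtain j' where j': "j' < n i'" "y = h (i',j')" using H(5) unfolding P_def by blast
    have "(i,j) \<in> KV d n" "(i',j') \<in> KV d n" using that j j' unfolding KV_def by auto
    moreover have "KE d n (i,j) (i',j')" using calculation that unfolding KE_def by auto
    ultimately show ?thesis using hE j j' by blast
  qed
  have comp1: "\<forall>i\<in>{1..d}. \<forall>i'\<in>{1..d}. i \<noteq> i' \<longrightarrow> (\<forall>x\<in>A i. \<forall>y\<in>A i'. E1 x y)"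
    using edge unfolding A_def prod_edges_def by blast
  have comp2: "\<forall>i\<in>{1..d}. \<forall>i'\<in>{1..d}. i \<noteq> i' \<longrightarrow> (\<forall>x\<in>B i. \<forall>y\<in>B i'. E2 x y)"
    using edge unfolding B_def prod_edges_def by blast
  have irr1: "\<forall>v. \<not> E1 v v" and irr2: "\<forall>v. \<not> E2 v v"
    using assms(3,4) unfolding graph_def by auto
  have bounds: "\<forall>i\<in>{1..d}. card (A i) \<ge> 1 \<and> card (B i) \<ge> 1 \<and> n i \<le> card (A i) * card (B i)"
  proof
    fix i assume i: "i \<in> {1..d}"
    have ne: "P i \<noteq> {}" using cardP[OF i] assms(2) i by (metis card.empty not_one_le_zero)
    have "n i \<le> card (A i \<times> B i)"
      using cardP[OF i] card_mono[OF _ PAB[of i]] sub1 sub2 i by auto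
    moreover have "A i \<noteq> {}" "B i \<noteq> {}" using ne unfolding A_def B_def by auto
    ultimately show "card (A i) \<ge> 1 \<and> card (B i) \<ge> 1 \<and> n i \<le> card (A i) * card (B i)"
      using sub1 sub2 i card_cartesian_product
      by (simp add: Suc_le_eq card_gt_0_iff)
  qed
  show "\<exists>a b :: nat \<Rightarrow> nat. (\<forall>i\<in>{1..d}. a i \<ge> 1 \<and> b i \<ge> 1 \<and> n i \<le> a i * b i)
       \<and> subgraph_iso (KV d a) (KE d a) V1 E1
       \<and> subgraph_iso (KV d b) (KE d b) V2 E2"
    apply (rule exI[of _ "\<lambda>i. card (A i)"], rule exI[of _ "\<lambda>i. card (B i)"])
    using bounds embed_multi[OF irr1 sub1 comp1] embed_multi[OF irr2 sub2 comp2] by simp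
next
  assume "\<exists>a b :: nat \<Rightarrow> nat. (\<forall>i\<in>{1..d}. a i \<ge> 1 \<and> b i \<ge> 1 \<and> n i \<le> a i * b i)
       \<and> subgraph_iso (KV d a) (KE d a) V1 E1
       \<and> subgraph_iso (KV d b) (KE d b) V2 E2"
  then obtain a b where ab: "\<forall>i\<in>{1..d}. a i \<ge> 1 \<and> b i \<ge> 1 \<and> n i \<le> a i * b i"
    and sa: "subgraph_iso (KV d a) (KE d a) V1 E1" and sb: "subgraph_iso (KV d b) (KE d b) V2 E2"
    by blast
  obtain f where f: "inj_on f (KV d a)" "f ` KV d a \<subseteq> V1"
      "\<forall>u\<in>KV d a. \<forall>v\<in>KV d a. KE d a u v \<longrightarrow> E1 (f u) (f v)"
    using sa unfolding subgraph_iso_def by blast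
  obtain g where g: "inj_on g (KV d b)" "g ` KV d b \<subseteq> V2"
      "\<forall>u\<in>KV d b. \<forall>v\<in>KV d b. KE d b u v \<longrightarrow> E2 (g u) (g v)"
    using sb unfolding subgraph_iso_def by blast
  define k where "k = (\<lambda>(i::nat, j::nat). (f (i, j div b i), g (i, j mod b i)))"
  have mem: "(i, j div b i) \<in> KV d a \<and> (i, j mod b i) \<in> KV d b" if "(i,j) \<in> KV d n" for i j
  proof -
    have i: "i \<in> {1..d}" "j < n i" using that unfolding KV_def by auto
    then have bp: "b i \<ge> 1" "j < a i * b i" using ab by (auto intro: less_le_trans)
    have "j div b i < a i" using bp by (simp add: div_less_iff_less_mult)
    moreover have "j mod b i < b i" using bp by simp
    ultimately show ?thesis using i unfolding KV_def by auto
  qed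
  show "subgraph_iso (KV d n) (KE d n) (V1 \<times> V2) (prod_edges E1 E2)"
    unfolding subgraph_iso_def
  proof (intro exI[of _ k] conjI)
    show "inj_on k (KV d n)"
    proof (rule inj_onI)
      fix x y assume x: "x \<in> KV d n" and y: "y \<in> KV d n" and eq: "k x = k y"
      obtain i j where xij: "x = (i,j)" by fastforce
      obtain i' j' where yij: "y = (i',j')" by fastforce
      have m1: "(i, j div b i) \<in> KV d a" "(i, j mod b i) \<in> KV d b" using mem x xij by auto
      have m2: "(i', j' div b i') \<in> KV d a" "(i', j' mod b i') \<in> KV d b" using mem y yij by auto
      have "f (i, j div b i) = f (i', j' div b i')" "g (i, j mod b i) = g (i', j' mod b i')"
        using eq xij yij unfolding k_def by auto
      then have "(i, j div b i) = (i', j' div b i')" "(i, j mod b i) = (i', j' mod b i')"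
        using f(1) g(1) m1 m2 unfolding inj_on_def by (metis, metis)
      then have "i = i'" "j = j'" by (simp, metis div_mult_mod_eq prod.inject)
      then show "x = y" using xij yij by simp
    qed
    show "k ` KV d n \<subseteq> V1 \<times> V2"
    proof
      fix z assume "z \<in> k ` KV d n"
      then obtain i j where "(i,j) \<in> KV d n" "z = k (i,j)" by auto
      then show "z \<in> V1 \<times> V2" using mem f(2) g(2) unfolding k_def by auto
    qed
    show "\<forall>u\<in>KV d n. \<forall>v\<in>KV d n. KE d n u v \<longrightarrow> prod_edges E1 E2 (k u) (k v)"
    proof (intro ballI impI)
      fix u v assume u: "u \<in> KV d n" and v: "v \<in> KV d n" and e: "KE d n u v"
      obtain i j where uij: "u = (i,j)" by fastforce
      obtain i' j' where vij: "v = (i',j')" by fastforce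
      have m1: "(i, j div b i) \<in> KV d a" "(i, j mod b i) \<in> KV d b" using mem u uij by auto
      have m2: "(i', j' div b i') \<in> KV d a" "(i', j' mod b i') \<in> KV d b" using mem v vij by auto
      have ne: "i \<noteq> i'" using e uij vij unfolding KE_def by auto
      have "E1 (f (i, j div b i)) (f (i', j' div b i'))" using f(3) m1 m2 ne unfolding KE_def by auto
      moreover have "E2 (g (i, j mod b i)) (g (i', j' mod b i'))" using g(3) m1 m2 ne unfolding KE_def by auto
      ultimately show "prod_edges E1 E2 (k u) (k v)" using uij vij unfolding k_def prod_edges_def by simp
    qed
  qed
qed

end
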